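(* Let $k\ge2$, $p\in(0,1)$, $q=1-p$, and $R^*=\frac{(k-1)^{k-1}}{k^k}\cdot\frac1{p^{k-1}q}$. If $z\in\mathbb{C}$ with $|z|<R^*$ satisfies $\frac1qS^{(k)}(p^{k-1}qz)=1$, then $z=1$.
   Context: $s^{(k)}_i=\frac{k-1}{ki-1}\binom{ki-1}{i-1}$ for $i\ge1$, and $S^{(k)}(z)=\sum_{i\ge1}s^{(k)}_iz^i$; this series satisfies $S^{(k)}(z)=z/(1-S^{(k)}(z))^{k-1}$ within its disc of convergence. *)

theory Defs
  imports "HOL-Analysis.Analysis"
begin

definition s_coeff :: "nat \<Rightarrow> nat \<Rightarrow> real" where
  "s_coeff k i = (real k - 1) / (real k * real i - 1) * real ((k * i - 1) choose (i - 1))"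

definition S_series :: "nat \<Rightarrow> complex \<Rightarrow> complex" where
  "S_series k z = (\<Sum>i. complex_of_real (s_coeff k (Suc i)) * z ^ Suc i)"

end

theory Submission imports Defs "HOL-Computational_Algebra.Formal_Power_Series" "HOL-Analysis.FPS_Convergence" begin
unbundle no vec_syntax
notation fps_nth (infixl \<open>$\<close> 75)

definition cc :: "nat \<Rightarrow> nat \<Rightarrow> nat \<Rightarrow> real" where
  "cc k r n = (if r = 0 \<and> n = 0 then 1 else real r / real (k*n+r) * real ((k*n+r) choose n))"

lemma cc_rec:
  assumes "k \<ge> 1"
  shows "cc k (Suc r) (Suc m) = cc k r (Suc m) + cc k (r+k) m"
proof -
  define N where "N = k*m+k+r"
  have e1: "k * Suc m + Suc r = N + 1" "k * Suc m + r = N" "k*m + (r+k) = N"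
    by (simp_all add: N_def)
  have "N \<ge> 1" using assms by (simp add: N_def)
  hence Npos: "real N > 0" by simp
  define A where "A = real (N choose m)"
  define B where "B = real (N choose Suc m)"
  define Cc where "Cc = real (Suc N choose Suc m)"
  have p1: "Cc = A + B" unfolding A_def B_def Cc_def by simp
  have p2: "Cc * (real m + 1) = (real N + 1) * A"
  proof -
    have "real (Suc N * (N choose m)) = real ((Suc N choose Suc m) * Suc m)"
      by (simp only: Suc_times_binomial_eq)
    hence "(real N + 1) * real (N choose m) = real (Suc N choose Suc m) * (real m + 1)"
      by (simp only: of_nat_mult of_nat_Suc add.commute)
    thus ?thesis unfolding A_def Cc_def by simp
  qed
  have lhs: "cc k (Suc r) (Suc m) = real (Suc r) / real (N+1) * Cc"
    unfolding cc_def Cc_def e1(1) by simp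
  have rhs: "cc k r (Suc m) + cc k (r+k) m = real r / real N * B + real (r+k) / real N * A"
  proof -
    have r1: "cc k r (Suc m) = real r / real N * B" unfolding cc_def B_def e1(2) by simp
    have r2: "cc k (r+k) m = real (r+k) / real N * A" unfolding cc_def A_def e1(3) using assms by simp
    show ?thesis using r1 r2 by simp
  qed
  have B': "B = (real N + 1) * A / (real m + 1) - A" using p1 p2
    by (simp add: field_simps)
  have Cc': "Cc = (real N + 1) * A / (real m + 1)" using p2 by (simp add: field_simps)
  have NN: "real N = real k * real m + real k + real r" by (simp add: N_def)
  have m1: "real m + 1 > 0" by simp
  have q1: "real r / real N * ((real N + 1) * A / (real m + 1) - A) + real (r+k) / real N * A
      = A * (real r * (real N + 1) + real k * (real m + 1)) / (real N * (real m + 1))"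
  proof -
    have h1: "\<And>r k N X A :: real. N \<noteq> 0 \<Longrightarrow> r / N * (X - A) + (r + k) / N * A = (r * X + k * A) / N"
      by (simp add: field_simps)
    have h2: "\<And>r k N M A :: real. M \<noteq> 0 \<Longrightarrow> r * ((N + 1) * A / M) + k * A = A * (r * (N + 1) + k * M) / M"
      by (simp add: field_simps)
    have "real r / real N * ((real N + 1) * A / (real m + 1) - A) + real (r+k) / real N * A
        = real r / real N * ((real N + 1) * A / (real m + 1) - A) + (real r + real k) / real N * A"
      by simp
    also have "\<dots> = (real r * ((real N + 1) * A / (real m + 1)) + real k * A) / real N"
      using Npos by (intro h1) simp
    also have "real r * ((real N + 1) * A / (real m + 1)) + real k * A
        = A * (real r * (real N + 1) + real k * (real m + 1)) / (real m + 1)"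
      using m1 by (intro h2) simp
    also have "A * (real r * (real N + 1) + real k * (real m + 1)) / (real m + 1) / real N
        = A * (real r * (real N + 1) + real k * (real m + 1)) / (real N * (real m + 1))"
      by (simp add: divide_divide_eq_left mult.commute)
    finally show ?thesis .
  qed
  have q2: "real r * (real N + 1) + real k * (real m + 1) = (real r + 1) * real N"
    by (simp add: NN algebra_simps)
  have q3: "real (Suc r) / real (N+1) * ((real N + 1) * A / (real m + 1)) = (real r + 1) * A / (real m + 1)"
  proof -
    have h3: "\<And>x n y M :: real. n \<noteq> 0 \<Longrightarrow> x / n * (n * y / M) = x * y / M"
      by simp
    have eqN: "real (N+1) = real N + 1" by simp
    have eqr: "real (Suc r) = real r + 1" by simp
    have nz: "real N + 1 \<noteq> 0" using Npos by simp
    show ?thesis unfolding eqN eqr by (rule h3[OF nz])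
  qed
  have nzN: "real N \<noteq> 0" using Npos by simp
  have "A * ((real r + 1) * real N) / (real N * (real m + 1)) = (real N * ((real r + 1) * A)) / (real N * (real m + 1))"
    by (simp add: ac_simps)
  also have "\<dots> = (real r + 1) * A / (real m + 1)" by (rule nonzero_mult_divide_mult_cancel_left[OF nzN])
  finally have q4: "A * ((real r + 1) * real N) / (real N * (real m + 1)) = (real r + 1) * A / (real m + 1)" .
  show ?thesis unfolding lhs rhs B' Cc' q1 q2 q3 q4 ..
qed

lemma s_cc:
  assumes "k \<ge> 2"
  shows "s_coeff k (Suc m) = cc k (k-1) m"
proof -
  have e: "k * Suc m - 1 = k*m + (k-1)" using assms by (simp add: algebra_simps)
  have e2: "real k * real (Suc m) - 1 = real (k*m + (k-1))" using assms
    by (simp add: of_nat_diff algebra_simps)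
  have e3: "real k - 1 = real (k - 1)" using assms by (simp add: of_nat_diff)
  have ne: "\<not> (k - 1 = 0 \<and> m = 0)" using assms by simp
  show ?thesis unfolding s_coeff_def cc_def if_not_P[OF ne] e e2 e3 by simp
qed

lemma main_fps:
  assumes k: "k \<ge> 2"
  defines "Sf \<equiv> Abs_fps (\<lambda>n. if n = 0 then 0 else complex_of_real (s_coeff k n))"
  shows "Sf * (1 - Sf)^(k-1) = fps_X"
proof -
  define phi :: "complex fps" where "phi = fps_X * (1 - fps_X)^(k-1)"
  define F where "F = fps_inv phi"
  have phi0: "phi $ 0 = 0" and phi1: "phi $ 1 = 1"
    unfolding phi_def by (simp_all add: fps_power_zeroth)
  have F0: "F $ 0 = 0" unfolding F_def fps_inv_def by simp
  have hphi: "phi oo F = fps_X" unfolding F_def using fps_inv_right[OF phi0] phi1 by simp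
  have hF: "F * (1 - F)^(k-1) = fps_X"
  proof -
    have "phi oo F = (fps_X oo F) * ((1 - fps_X) oo F)^(k-1)"
      unfolding phi_def fps_compose_mult_distrib[OF F0] fps_compose_power[OF F0] ..
    also have "\<dots> = F * (1 - F)^(k-1)"
      using F0 by (simp add: fps_compose_sub_distrib)
    finally show ?thesis using hphi by simp
  qed
  define W where "W = inverse (1 - F)"
  have hW: "W * (1 - F) = 1" unfolding W_def by (rule inverse_mult_eq_1) (simp add: F0)
  have W0: "W $ 0 = 1" unfolding W_def using F0 by simp
  have hW1: "W = 1 + F * W" using hW by (simp add: algebra_simps)
  have hF2: "F = fps_X * W^(k-1)"
  proof -
    have "fps_X * W^(k-1) = F * ((1 - F) * W)^(k-1)"
      by (subst hF[symmetric]) (simp add: power_mult_distrib)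
    also have "\<dots> = F" using hW by (simp add: mult.commute)
    finally show ?thesis by simp
  qed
  have hW2: "W = 1 + fps_X * W^k"
  proof -
    have "W^k = W^(k-1) * W" using k by (metis Suc_diff_1 not_numeral_le_zero not_gr0 power_Suc2)
    then show ?thesis using hW1 hF2 by (simp add: algebra_simps)
  qed
  have pw: "(W^r) $ n = complex_of_real (cc k r n)" for r n
  proof (induction n arbitrary: r)
    case 0
    then show ?case using W0 by (simp add: fps_power_zeroth cc_def)
  next
    case (Suc m)
    note IHm = Suc.IH
    show ?case
    proof (induction r)
      case 0
      then show ?case by (simp add: cc_def)
    next
      case (Suc r)
      have "W^(Suc r) = W^r * W" by simp
      also have "\<dots> = W^r * (1 + fps_X * W^k)" using arg_cong[where f="\<lambda>x. W^r * x", OF hW2] .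
      also have "\<dots> = W^r + fps_X * W^(r+k)" by (simp add: algebra_simps power_add)
      finally have "W^(Suc r) = W^r + fps_X * W^(r+k)" .
      hence "(W^(Suc r)) $ Suc m = (W^r) $ Suc m + (W^(r+k)) $ m" by simp
      also have "\<dots> = complex_of_real (cc k r (Suc m) + cc k (r+k) m)"
        using Suc.IH IHm[of "r+k"] by simp
      also have "\<dots> = complex_of_real (cc k (Suc r) (Suc m))"
        using cc_rec[of k r m] k by simp
      finally show ?case .
    qed
  qed
  have "Sf = F"
  proof (rule fps_ext)
    fix n show "Sf $ n = F $ n"
    proof (cases n)
      case 0 then show ?thesis using F0 by (simp add: Sf_def)
    next
      case (Suc m)
      then show ?thesis unfolding hF2 using pw[of "k-1" m] s_cc[OF k, of m] by (simp add: Sf_def)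
    qed
  qed
  then show ?thesis using hF by simp
qed


lemma binom_bound:
  assumes k: "k \<ge> 2" and n: "n \<ge> 1"
  shows "real ((k*n) choose n) * (real k - 1)^((k-1)*n) \<le> real k ^ (k*n)"
proof -
  define a where "a = real n"
  define b where "b = real ((k-1)*n)"
  have kn: "k*n - n = (k-1)*n" by (simp add: algebra_simps)
  have "real ((k*n) choose n) * a^n * b^(k*n - n) \<le> (\<Sum>j\<le>k*n. real ((k*n) choose j) * a^j * b^(k*n-j))"
    by (rule member_le_sum[where f="\<lambda>j. real ((k*n) choose j) * a^j * b^(k*n-j)"])
       (use k in \<open>auto simp: a_def b_def intro!: mult_nonneg_nonneg\<close>)
  also have "\<dots> = (a + b)^(k*n)" by (rule binomial_ring[symmetric])
  also have "a + b = real k * real n" unfolding a_def b_def using k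
    by (simp add: of_nat_diff algebra_simps)
  finally have "real ((k*n) choose n) * a^n * b^((k-1)*n) \<le> (real k * real n)^(k*n)" by (simp add: kn)
  moreover have "a^n * b^((k-1)*n) = (real k - 1)^((k-1)*n) * real n ^ (k*n)"
  proof -
    have "b = (real k - 1) * real n" unfolding b_def using k by (simp add: of_nat_diff)
    hence "a^n * b^((k-1)*n) = (real k - 1)^((k-1)*n) * (real n ^ n * real n ^ ((k-1)*n))"
      by (simp add: a_def power_mult_distrib)
    also have "real n ^ n * real n ^ ((k-1)*n) = real n ^ (k*n)"
    proof -
      have kk: "n + (k-1)*n = k*n" using k by (cases k) auto
      show ?thesis by (subst power_add[symmetric]) (simp only: kk)
    qed
    finally show ?thesis .
  qed
  ultimately have "real ((k*n) choose n) * (real k - 1)^((k-1)*n) * real n ^ (k*n) \<le> real k ^ (k*n) * real n ^ (k*n)"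
    by (simp add: power_mult_distrib mult.assoc)
  moreover have "real n ^ (k*n) > 0" using n by simp
  ultimately show ?thesis by simp
qed

lemma s_bound:
  assumes k: "k \<ge> 2" and n: "n \<ge> 1"
  shows "0 \<le> s_coeff k n" "s_coeff k n \<le> (real k ^ k / (real k - 1)^(k-1)) ^ n"
proof -
  have kn1: "real k * real n - 1 \<ge> real k - 1" using n
    by (metis diff_right_mono mult.right_neutral mult_left_mono of_nat_0_le_iff of_nat_1 of_nat_mono)
  have k1: "real k - 1 > 0" using k by simp
  have kn_ge: "real k * real n \<ge> 1" using kn1 k1 by linarith
  show "0 \<le> s_coeff k n" unfolding s_coeff_def using kn1 k1 kn_ge
    by (intro mult_nonneg_nonneg divide_nonneg_nonneg) auto
  have f1: "(real k - 1) / (real k * real n - 1) \<le> 1"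
  proof -
    have "real k * real n - 1 > 0" using kn1 k1 by linarith
    thus ?thesis using kn1 by (simp add: pos_divide_le_eq)
  qed
  have f0: "0 \<le> (real k - 1) / (real k * real n - 1)" using k1 kn_ge by simp
  have "s_coeff k n \<le> real ((k*n - 1) choose (n - 1))" unfolding s_coeff_def
    by (rule mult_left_le_one_le[OF _ f0 f1]) simp
  also have "\<dots> \<le> real ((k*n) choose n)"
  proof -
    have "k*n \<ge> 1*1" using k n by (intro mult_le_mono) auto
    hence "k*n = Suc (k*n - 1)" by simp
    moreover have "n = Suc (n - 1)" using n by simp
    ultimately have "(k*n) choose n = ((k*n-1) choose (n-1)) + ((k*n-1) choose n)"
      by (metis binomial_Suc_Suc)
    thus ?thesis by simp
  qed
  also have "\<dots> \<le> real k ^ (k*n) / (real k - 1)^((k-1)*n)"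
    using binom_bound[OF k n] k1 by (simp add: field_simps)
  also have "\<dots> = (real k ^ k / (real k - 1)^(k-1)) ^ n"
    by (simp add: power_divide power_mult)
  finally show "s_coeff k n \<le> (real k ^ k / (real k - 1)^(k-1)) ^ n" .
qed


lemma radius_S:
  assumes k: "k \<ge> 2"
  shows "fps_conv_radius (Abs_fps (\<lambda>n. if n = 0 then 0 else complex_of_real (s_coeff k n)))
          \<ge> ereal ((real k - 1)^(k-1) / real k ^ k)"
  unfolding fps_conv_radius_def
proof (rule conv_radius_geI_ex')
  define Q where "Q = real k ^ k / (real k - 1)^(k-1)"
  have k1: "real k - 1 > 0" using k by simp
  have Qpos: "Q > 0" unfolding Q_def using k1 k by simp
  fix r :: real assume r: "0 < r" "ereal r < ereal ((real k - 1)^(k-1) / real k ^ k)"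
  hence "r < 1 / Q" unfolding Q_def by simp
  hence rQ: "Q * r < 1" using Qpos by (simp add: field_simps)
  show "summable (\<lambda>n. fps_nth (Abs_fps (\<lambda>n. if n = 0 then 0 else complex_of_real (s_coeff k n))) n * of_real r ^ n)"
  proof (rule summable_comparison_test[where g="\<lambda>n. (Q*r)^n"])
    show "summable (\<lambda>n. (Q*r)^n)" using rQ Qpos r by (intro summable_geometric) simp
    show "\<exists>N. \<forall>n\<ge>N. norm (fps_nth (Abs_fps (\<lambda>n. if n = 0 then 0 else complex_of_real (s_coeff k n))) n * of_real r ^ n) \<le> (Q*r)^n"
    proof (intro exI allI impI)
      fix n :: nat assume "n \<ge> 0"
      show "norm (fps_nth (Abs_fps (\<lambda>n. if n = 0 then 0 else complex_of_real (s_coeff k n))) n * of_real r ^ n) \<le> (Q*r)^n"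
      proof (cases "n = 0")
        case True then show ?thesis by simp
      next
        case False
        hence n1: "n \<ge> 1" by simp
        have "norm (fps_nth (Abs_fps (\<lambda>n. if n = 0 then 0 else complex_of_real (s_coeff k n))) n * of_real r ^ n)
              = s_coeff k n * r^n" using False s_bound(1)[OF k n1] r
          by (simp add: norm_mult norm_power)
        also have "\<dots> \<le> Q^n * r^n" using s_bound(2)[OF k n1] r unfolding Q_def
          by (intro mult_right_mono) simp_all
        finally show ?thesis by (simp add: power_mult_distrib)
      qed
    qed
  qed
qed

theorem lemma4p3:
  fixes k :: nat and p q Rstar :: real and z :: complex
  assumes "k \<ge> 2"
    and "0 < p" and "p < 1"
    and "q = 1 - p"
    and "Rstar = (real k - 1) ^ (k - 1) / real k ^ k * (1 / (p ^ (k - 1) * q))"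
    and "norm z < Rstar"
    and "S_series k (complex_of_real (p ^ (k - 1) * q) * z) / complex_of_real q = 1"
  shows "z = 1"
proof -
  note k = assms(1)
  define Sf where "Sf = Abs_fps (\<lambda>n. if n = 0 then 0 else complex_of_real (s_coeff k n))"
  define R where "R = (real k - 1)^(k-1) / real k ^ k"
  define c where "c = p ^ (k - 1) * q"
  define w where "w = complex_of_real c * z"
  have qpos: "q > 0" using assms by simp
  have cpos: "c > 0" unfolding c_def using qpos assms by simp
  have "norm w = c * norm z" unfolding w_def using cpos by (simp add: norm_mult)
  also have "\<dots> < c * Rstar" using assms(6) cpos by simp
  also have "c * Rstar = R"
  proof -
    have "Rstar = R / c" unfolding assms(5) R_def c_def by simp
    thus ?thesis using cpos by simp
  qed
  finally have wR: "norm w < R" .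
  have rad: "ereal (norm w) < fps_conv_radius Sf"
  proof -
    have "ereal (norm w) < ereal R" using wR by simp
    also have "ereal R \<le> fps_conv_radius Sf" using radius_S[OF k] unfolding Sf_def R_def .
    finally show ?thesis .
  qed
  have rad1: "ereal (norm w) < fps_conv_radius (1 - Sf)"
    using fps_conv_radius_diff[of 1 Sf] rad by (simp add: min_def split: if_splits)
  have rad2: "ereal (norm w) < fps_conv_radius ((1 - Sf)^(k-1))"
    using fps_conv_radius_power[of "1 - Sf" "k-1"] rad1 by (meson less_le_trans)
  have "eval_fps (Sf * (1 - Sf)^(k-1)) w = eval_fps Sf w * (1 - eval_fps Sf w)^(k-1)"
    using rad rad1 rad2 by (simp add: eval_fps_mult eval_fps_power eval_fps_diff)
  hence eq: "eval_fps Sf w * (1 - eval_fps Sf w)^(k-1) = w"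
    using main_fps[OF k] unfolding Sf_def by simp
  have summ: "summable (\<lambda>n. fps_nth Sf n * w^n)"
    using rad unfolding fps_conv_radius_def by (rule summable_in_conv_radius)
  have "S_series k w = (\<Sum>n. fps_nth Sf (Suc n) * w^(Suc n))"
    unfolding S_series_def Sf_def by simp
  also have "\<dots> = eval_fps Sf w" unfolding eval_fps_def using suminf_split_head[OF summ]
    by (simp add: Sf_def)
  finally have "eval_fps Sf w = complex_of_real q"
    using assms(7) qpos unfolding w_def c_def by (simp add: divide_eq_eq)
  with eq have "complex_of_real q * (1 - complex_of_real q)^(k-1) = w" by simp
  hence "complex_of_real c = complex_of_real c * z"
    unfolding w_def c_def using assms(4) by (simp add: mult.commute)
  thus "z = 1" using cpos by simp
qed

end
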